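(* Let $c\geq 1$ be an integer. For all integers $n\geq 1$, $$\bar a_c(n)\equiv\begin{cases}2 \pmod 4 & \text{if } n=k^2 \text{ for some } k\in\mathbb{Z},\\ 2(c+1)\pmod 4 & \text{if } n=2k^2 \text{ for some } k\in\mathbb{Z},\\ 0\pmod 4 & \text{otherwise.}\end{cases}$$
   Context: For an integer $k\geq 1$ let $f_k:=\prod_{n\geq 1}(1-q^{kn})$. For an integer $c\geq1$, the generalized overcubic partition function $\bar a_c(n)$ is defined by the generating function $\sum_{n\geq 0}\bar a_c(n)q^n=\dfrac{f_4^{c-1}}{f_1^2f_2^{2c-3}}$. *)

theory Defs
  imports "HOL-Computational_Algebra.Formal_Power_Series" "HOL-Number_Theory.Cong"
begin

text \<open>f_k = prod_{m>=1} (1 - q^(k m)) as a formal power series over the rationals.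
  The infinite product is taken in the usual formal (q-adic) sense: for k >= 1 the
  coefficient of q^n is already determined by the finite product over m = 1..n.\<close>
definition eta_f :: "nat \<Rightarrow> rat fps" where
  "eta_f k = Abs_fps (\<lambda>n. fps_nth (\<Prod>m\<in>{1..n}. (1 - fps_X ^ (k * m) :: rat fps)) n)"

definition fps_ipow :: "rat fps \<Rightarrow> int \<Rightarrow> rat fps" where
  "fps_ipow f e = (if 0 \<le> e then f ^ nat e else inverse (f ^ nat (- e)))"

definition overcubic_gf :: "nat \<Rightarrow> rat fps" where
  "overcubic_gf c = fps_ipow (eta_f 4) (int c - 1)
      * inverse ((eta_f 1) ^ 2 * fps_ipow (eta_f 2) (2 * int c - 3))"

definition abar :: "nat \<Rightarrow> nat \<Rightarrow> rat" where
  "abar c n = fps_nth (overcubic_gf c) n"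

end

theory Submission
  imports Defs "HOL-Library.Numeral_Type"
begin
unbundle fps_syntax

definition fmap :: "('a \<Rightarrow> 'b) \<Rightarrow> 'a fps \<Rightarrow> 'b fps" where
  "fmap h f = Abs_fps (\<lambda>n. h (f $ n))"

lemma fmap_nth [simp]: "fmap h f $ n = h (f $ n)"
  by (simp add: fmap_def)

lemma fmap_mult [simp]: "fmap (of_int :: int \<Rightarrow> 'b::comm_ring_1) (f * g) = fmap of_int f * fmap of_int g"
  by (rule fps_ext) (simp add: fps_mult_nth)

lemma fmap_one [simp]: "fmap (of_int :: int \<Rightarrow> 'b::comm_ring_1) 1 = 1"
  by (rule fps_ext) simp

lemma fmap_diff [simp]: "fmap (of_int :: int \<Rightarrow> 'b::comm_ring_1) (f - g) = fmap of_int f - fmap of_int g"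
  by (rule fps_ext) simp

lemma fmap_X [simp]: "fmap (of_int :: int \<Rightarrow> 'b::comm_ring_1) fps_X = fps_X"
  by (rule fps_ext) (simp add: fps_X_nth)

lemma fmap_X_power: "fmap (of_int :: int \<Rightarrow> 'b::comm_ring_1) (fps_X ^ k) = fps_X ^ k"
  by (rule fps_ext) (simp add: fps_X_power_nth)

lemma fmap_power [simp]: "fmap (of_int :: int \<Rightarrow> 'b::comm_ring_1) (f ^ k) = fmap of_int f ^ k"
  by (induction k) simp_all

lemma fmap_prod [simp]: "fmap (of_int :: int \<Rightarrow> 'b::comm_ring_1) (prod F A) = (\<Prod>a\<in>A. fmap of_int (F a))"
  by (induction A rule: infinite_finite_induct) simp_all

definition agree :: "nat \<Rightarrow> 'a::comm_ring_1 fps \<Rightarrow> 'a fps \<Rightarrow> bool" where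
  "agree N f g \<longleftrightarrow> (\<forall>j\<le>N. f $ j = g $ j)"

lemma agree_mult:
  assumes "agree N f f'" "agree N g g'" shows "agree N (f * g) (f' * g')"
  unfolding agree_def
proof (intro allI impI)
  fix j assume j: "j \<le> N"
  show "(f * g) $ j = (f' * g') $ j"
    unfolding fps_mult_nth
    by (rule sum.cong) (use assms j in \<open>auto simp: agree_def\<close>)
qed

lemma agree_prod_one:
  "finite A \<Longrightarrow> (\<forall>a\<in>A. agree N (F a) 1) \<Longrightarrow> agree N (prod F A) 1"
proof (induction A rule: finite_induct)
  case empty then show ?case by (simp add: agree_def)
next
  case (insert x A)
  then show ?case using agree_mult[of N "F x" 1 "prod F A" 1] by simp
qed

definition P :: "nat \<Rightarrow> nat \<Rightarrow> 'a::comm_ring_1 fps" where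
  "P k N = (\<Prod>m\<in>{1..N}. 1 - fps_X ^ (k * m))"

lemma P_trunc:
  assumes k: "k \<ge> 1" and iN: "i \<le> N"
  shows "P k N $ i = (P k i :: 'a::comm_ring_1 fps) $ i"
proof -
  have split: "{1..N} = {1..i} \<union> {i+1..N}" using iN by auto
  have eq: "P k N = P k i * (\<Prod>m\<in>{i+1..N}. 1 - fps_X ^ (k * m) :: 'a fps)"
    unfolding P_def split by (subst prod.union_disjoint) auto
  have pa: "agree i (\<Prod>m\<in>{i+1..N}. 1 - fps_X ^ (k * m) :: 'a fps) 1"
  proof (rule agree_prod_one)
    show "\<forall>a\<in>{i + 1..N}. agree i (1 - fps_X ^ (k * a) :: 'a fps) 1"
    proof
      fix a assume a: "a \<in> {i+1..N}"
      have "a > i" using a by simp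
      moreover have "a \<le> k * a" using k by simp
      ultimately have "k * a > i" by linarith
      then show "agree i (1 - fps_X ^ (k * a) :: 'a fps) 1"
        by (auto simp: agree_def fps_X_power_nth)
    qed
  qed simp
  have "agree i (P k i) (P k i :: 'a fps)" by (simp add: agree_def)
  from agree_mult[OF this pa] have "agree i (P k N) (P k i * 1 :: 'a fps)"
    unfolding eq .
  then show ?thesis by (simp add: agree_def)
qed

definition E :: "nat \<Rightarrow> int fps" where
  "E k = Abs_fps (\<lambda>n. P k n $ n)"

lemma E_nth: "k \<ge> 1 \<Longrightarrow> i \<le> N \<Longrightarrow> E k $ i = P k N $ i"
  using P_trunc[of k i N, where 'a=int, symmetric] by (simp add: E_def)

lemma fmap_P: "fmap (of_int :: int \<Rightarrow> 'b::comm_ring_1) (P k N) = P k N"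
  by (simp add: P_def)

lemma eta_E: "eta_f k = fmap of_int (E k)"
proof (rule fps_ext)
  fix n
  have "(P k n :: rat fps) $ n = of_int ((P k n :: int fps) $ n)"
    using fmap_nth[of "of_int :: int \<Rightarrow> rat" "P k n :: int fps" n] unfolding fmap_P[where 'b=rat] .
  then show "eta_f k $ n = fmap of_int (E k) $ n"
    by (simp add: eta_f_def E_def P_def)
qed

lemma E0 [simp]: "E k $ 0 = 1"
  by (simp add: E_def P_def)

lemma fmapE_agree: "k \<ge> 1 \<Longrightarrow> agree N (fmap (of_int :: int \<Rightarrow> 'b::comm_ring_1) (E k)) (P k N)"
  unfolding agree_def
proof (intro allI impI)
  fix j assume "k \<ge> 1" "j \<le> N"
  then have "E k $ j = P k N $ j" by (rule E_nth)
  then show "fmap of_int (E k) $ j = (P k N :: 'b fps) $ j"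
    using fmap_P[of k N, where 'b='b] by (metis fmap_nth)
qed


lemma four0: "(4::4) = 0" by simp
lemma four0f: "(4::4 fps) = 0" by (rule fps_ext) (simp add: fps_numeral_nth)
lemma char4: "CHAR(4) = 4" by simp

lemma sq_inj: "(m::nat) * m = a * a \<Longrightarrow> m = a"
  by (metis power2_eq_square power2_eq_iff_nonneg zero_le)

lemma div_parity:
  fixes n :: nat assumes n: "0 < n"
  shows "odd (card {m. m dvd n}) \<longleftrightarrow> (\<exists>a. n = a^2)"
proof -
  define A where "A = {m. m dvd n}"
  define L where "L = {m\<in>A. m*m < n}"
  define U where "U = {m\<in>A. n < m*m}"
  define M where "M = {m\<in>A. m*m = n}"
  have finA: "finite A" unfolding A_def using n by (simp add: finite_divisors_nat)
  have AU: "A = L \<union> U \<union> M" unfolding L_def U_def M_def by auto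
  have fL: "finite L" and fU: "finite U" and fM: "finite M"
    using finA by (auto simp: L_def U_def M_def)
  have d1: "L \<inter> U = {}" and d2: "(L \<union> U) \<inter> M = {}" by (auto simp: L_def U_def M_def)
  have "card A = card (L \<union> U) + card M"
    unfolding AU by (rule card_Un_disjoint) (use fL fU fM d2 in auto)
  also have "card (L \<union> U) = card L + card U"
    by (rule card_Un_disjoint) (use fL fU d1 in auto)
  finally have cardA: "card A = card L + card U + card M" .
  have key: "\<And>m. m \<in> A \<Longrightarrow> m * (n div m) = n \<and> n div (n div m) = m \<and> (n div m) \<in> A \<and> 0 < m \<and> 0 < n div m"
  proof -
    fix m assume "m \<in> A"
    then obtain q where q: "n = m * q" by (auto simp: A_def elim: dvdE)
    have m0: "0 < m" "0 < q" using q n by (auto intro: Nat.gr0I)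
    then have "n div m = q" using q by simp
    moreover have "n div q = m" using q m0 by simp
    ultimately show "m * (n div m) = n \<and> n div (n div m) = m \<and> (n div m) \<in> A \<and> 0 < m \<and> 0 < n div m"
      using q m0 by (auto simp: A_def)
  qed
  have "bij_betw (\<lambda>m. n div m) L U"
  proof (rule bij_betw_byWitness[where f' = "\<lambda>m. n div m"])
    show "\<forall>a\<in>L. n div (n div a) = a" using key by (auto simp: L_def)
    show "\<forall>a\<in>U. n div (n div a) = a" using key by (auto simp: U_def)
    show "(\<lambda>m. n div m) ` L \<subseteq> U"
    proof
      fix x assume "x \<in> (\<lambda>m. n div m) ` L"
      then obtain m where m: "m \<in> L" and x: "x = n div m" by auto
      have mA: "m \<in> A" and mm: "m * m < n" using m by (auto simp: L_def)
      from key[OF mA] have e: "m * x = n" "x \<in> A" "0 < m" using x by auto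
      have "m * m < m * x" using mm e(1) by simp
      then have "m < x" by simp
      then have "m * x < x * x" by (intro mult_strict_right_mono) auto
      then show "x \<in> U" using e by (auto simp: U_def)
    qed
    show "(\<lambda>m. n div m) ` U \<subseteq> L"
    proof
      fix x assume "x \<in> (\<lambda>m. n div m) ` U"
      then obtain m where m: "m \<in> U" and x: "x = n div m" by auto
      have mA: "m \<in> A" and mm: "n < m * m" using m by (auto simp: U_def)
      from key[OF mA] have e: "m * x = n" "x \<in> A" "0 < m" "0 < x" using x by auto
      have "x * m < m * m" using mm e(1) by (simp add: mult.commute)
      then have "x < m" by simp
      then have "x * x < m * x" using e(4) by (intro mult_strict_right_mono) auto
      then show "x \<in> L" using e by (auto simp: L_def)
    qed
  qed
  then have cLU: "card U = card L" by (simp add: bij_betw_same_card)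
  have cM: "card M = (if \<exists>a. n = a^2 then 1 else 0)"
  proof (cases "\<exists>a. n = a^2")
    case True
    then obtain a where a: "n = a^2" by auto
    have "M = {a}"
    proof
      show "M \<subseteq> {a}"
      proof
        fix m assume "m \<in> M"
        then have "m * m = a * a" unfolding M_def using a by (simp add: power2_eq_square)
        then show "m \<in> {a}" using sq_inj by blast
      qed
      show "{a} \<subseteq> M" unfolding M_def A_def using a by (simp add: power2_eq_square)
    qed
    then show ?thesis using True by simp
  next
    case False
    have "M = {}"
    proof (rule ccontr)
      assume "M \<noteq> {}"
      then obtain m where "m \<in> M" by blast
      then have "n = m^2" unfolding M_def by (simp add: power2_eq_square)
      then show False using False by blast
    qed
    then show ?thesis using False by simp
  qed
  show ?thesis using cardA cLU cM by (simp add: A_def)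
qed

lemma not_sq_2sq: "(a::nat)^2 = 2 * b^2 \<Longrightarrow> b = 0"
proof (induction a arbitrary: b rule: less_induct)
  case (less a)
  show ?case
  proof (rule ccontr)
    assume b0: "b \<noteq> 0"
    have "even (a^2)" using less.prems by simp
    then have "even a" by simp
    then obtain c where c: "a = 2 * c" by auto
    then have bc: "b^2 = 2 * c^2" using less.prems by (simp add: power_mult_distrib)
    have "b^2 < a^2" using less.prems b0 by simp
    then have "b < a" by (simp add: power_less_imp_less_base)
    from less.IH[OF this bc] have "c = 0" .
    then show False using c less.prems b0 by simp
  qed
qed

definition Dv :: "nat \<Rightarrow> 4 fps" where
  "Dv d = Abs_fps (\<lambda>j. of_bool (0 < j \<and> d dvd j))"

lemma Dv_mult:
  assumes d: "d \<ge> 1" shows "(1 - fps_X ^ d) * Dv d = fps_X ^ d"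
proof (rule fps_ext)
  fix n
  have "((1 - fps_X ^ d) * Dv d) $ n = Dv d $ n - (fps_X ^ d * Dv d) $ n"
    by (simp add: algebra_simps)
  also have "\<dots> = (fps_X ^ d :: 4 fps) $ n"
  proof (cases "n < d")
    case True
    then have "\<not> (0 < n \<and> d dvd n)" using d by (auto dest: dvd_imp_le)
    then show ?thesis using True by (simp add: fps_X_power_mult_nth Dv_def fps_X_power_nth)
  next
    case False
    show ?thesis
    proof (cases "n = d")
      case True then show ?thesis using d by (simp add: fps_X_power_mult_nth Dv_def fps_X_power_nth)
    next
      case nd: False
      with False have "n - d > 0" by simp
      moreover have "d dvd (n - d) \<longleftrightarrow> d dvd n" using False by (simp add: dvd_minus_self)
      ultimately show ?thesis using False nd by (simp add: fps_X_power_mult_nth Dv_def fps_X_power_nth)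
    qed
  qed
  finally show "((1 - fps_X ^ d) * Dv d) $ n = (fps_X ^ d :: 4 fps) $ n" .
qed

lemma factor:
  assumes d: "d \<ge> 1" shows "(1 - fps_X ^ d) ^ 2 * (1 + 2 * Dv d) = 1 - fps_X ^ (2 * d)"
proof -
  define Y :: "4 fps" where "Y = fps_X ^ d"
  have h: "(1 - Y) * Dv d = Y" using Dv_mult[OF d] by (simp add: Y_def)
  have "(1 - Y) ^ 2 * (1 + 2 * Dv d) = (1 - Y) ^ 2 + 2 * (1 - Y) * ((1 - Y) * Dv d)"
    by (simp add: algebra_simps power2_eq_square)
  also have "\<dots> = 1 - Y ^ 2" unfolding h by (simp add: algebra_simps power2_eq_square)
  finally show ?thesis by (simp add: Y_def power_mult mult.commute)
qed

lemma prod_one_plus_two: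
  "finite A \<Longrightarrow> (\<Prod>a\<in>A. 1 + 2 * g a :: 4 fps) = 1 + 2 * sum g A"
proof (induction A rule: finite_induct)
  case empty then show ?case by simp
next
  case (insert x A)
  have "(1 + 2 * g x) * (1 + 2 * sum g A) = 1 + 2 * (g x + sum g A) + 4 * (g x * sum g A)"
    by (simp add: algebra_simps)
  then show ?case using insert four0f by simp
qed

lemma P_double:
  assumes k: "k \<ge> 1"
  shows "(P (2 * k) N :: 4 fps) = P k N ^ 2 * (\<Prod>m\<in>{1..N}. 1 + 2 * Dv (k * m))"
proof -
  have "(P (2 * k) N :: 4 fps) = (\<Prod>m\<in>{1..N}. (1 - fps_X ^ (k * m)) ^ 2 * (1 + 2 * Dv (k * m)))"
    unfolding P_def
  proof (rule prod.cong)
    fix m assume "m \<in> {1..N}"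
    then have "k * m \<ge> 1" using k by simp
    from factor[OF this] show "1 - fps_X ^ (2 * k * m) = (1 - fps_X ^ (k * m)) ^ 2 * (1 + 2 * Dv (k * m))"
      by (simp add: mult.assoc)
  qed simp
  also have "\<dots> = P k N ^ 2 * (\<Prod>m\<in>{1..N}. 1 + 2 * Dv (k * m))"
    by (simp add: P_def prod.distrib prod_power_distrib)
  finally show ?thesis .
qed

definition S :: "nat \<Rightarrow> 4 fps" where
  "S k = Abs_fps (\<lambda>j. of_bool (0 < j \<and> (\<exists>a. j = k * a ^ 2)))"

lemma two_of_nat: "2 * (of_nat c :: 4) = of_bool (odd c) * 2"
proof -
  have "c = 2 * (c div 2) + c mod 2" by simp
  then have "(of_nat c :: 4) = 2 * of_nat (c div 2) + of_nat (c mod 2)"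
    by (metis of_nat_add of_nat_mult of_nat_numeral)
  then have "2 * (of_nat c :: 4) = 4 * of_nat (c div 2) + 2 * of_nat (c mod 2)"
    by (simp add: algebra_simps)
  also have "\<dots> = 2 * of_nat (c mod 2)" by (subst four0) simp
  also have "\<dots> = of_bool (odd c) * 2" by (cases "even c") (auto simp: odd_iff_mod_2_eq_one)
  finally show ?thesis .
qed

lemma card_parity:
  fixes k j N :: nat
  assumes k: "k \<ge> 1" and j: "0 < j" "j \<le> N"
  shows "odd (card ({1..N} \<inter> {m. 0 < j \<and> k * m dvd j})) \<longleftrightarrow> (\<exists>a. j = k * a ^ 2)"
proof (cases "k dvd j")
  case True
  then obtain j' where j': "j = k * j'" by auto
  have j'0: "0 < j'" using j(1) unfolding j' by simp
  have "{1..N} \<inter> {m. 0 < j \<and> k * m dvd j} = {m. m dvd j'}"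
  proof (intro set_eqI iffI)
    fix m assume "m \<in> {1..N} \<inter> {m. 0 < j \<and> k * m dvd j}"
    then show "m \<in> {m. m dvd j'}" using j' k by auto
  next
    fix m assume "m \<in> {m. m dvd j'}"
    then have "m dvd j'" by simp
    then have "m \<le> j'" "0 < m" using j'0 by (auto dest: dvd_imp_le intro: Nat.gr0I)
    moreover have "j' \<le> j" using j' k by simp
    ultimately have "m \<le> N" using j(2) by linarith
    then show "m \<in> {1..N} \<inter> {m. 0 < j \<and> k * m dvd j}"
      using j j' \<open>m dvd j'\<close> by auto
  qed
  moreover have "(\<exists>a. j = k * a ^ 2) \<longleftrightarrow> (\<exists>a. j' = a ^ 2)" using j' k by auto
  ultimately show ?thesis using div_parity[OF j'0] by simp
next
  case False
  then have "{1..N} \<inter> {m. 0 < j \<and> k * m dvd j} = {}"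
    by (auto dest: dvd_mult_left)
  moreover have "\<not> (\<exists>a. j = k * a ^ 2)" using False by auto
  ultimately show ?thesis by simp
qed

lemma sumDv_agree:
  assumes k: "k \<ge> 1"
  shows "agree N (1 + 2 * (\<Sum>m\<in>{1..N}. Dv (k * m))) (1 + 2 * S k)"
  unfolding agree_def
proof (intro allI impI)
  fix j assume jN: "j \<le> N"
  show "(1 + 2 * (\<Sum>m\<in>{1..N}. Dv (k * m))) $ j = (1 + 2 * S k) $ j"
  proof (cases "j = 0")
    case True then show ?thesis by (simp add: Dv_def S_def numeral_fps_const fps_mult_left_const_nth fps_sum_nth)
  next
    case False
    have "(\<Sum>m\<in>{1..N}. Dv (k * m)) $ j = (\<Sum>m\<in>{1..N}. of_bool (0 < j \<and> k * m dvd j))"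
      by (simp add: fps_sum_nth Dv_def)
    also have "\<dots> = of_nat (card ({1..N} \<inter> {m. 0 < j \<and> k * m dvd j}))"
      by (rule sum_of_bool_eq) simp_all
    finally have e: "(\<Sum>m\<in>{1..N}. Dv (k * m)) $ j = of_nat (card ({1..N} \<inter> {m. 0 < j \<and> k * m dvd j}))" .
    have "(1 + 2 * (\<Sum>m\<in>{1..N}. Dv (k * m))) $ j = 2 * (\<Sum>m\<in>{1..N}. Dv (k * m)) $ j"
      using False by (simp add: fps_numeral_nth fps_mult_nth sum.atLeast_Suc_atMost numeral_fps_const fps_mult_left_const_nth)
    also have "\<dots> = of_bool (\<exists>a. j = k * a ^ 2) * 2"
      unfolding e two_of_nat using card_parity[OF k _ jN] False by simp
    also have "\<dots> = (1 + 2 * S k) $ j"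
      using False by (simp add: S_def numeral_fps_const fps_mult_left_const_nth)
    finally show ?thesis .
  qed
qed

definition F4 :: "nat \<Rightarrow> 4 fps" where "F4 k = fmap of_int (E k)"
definition T :: "nat \<Rightarrow> 4 fps" where "T k = 1 + 2 * S k"

lemma agree_sym: "agree N f g \<Longrightarrow> agree N g f" by (simp add: agree_def)
lemma agree_trans: "agree N f g \<Longrightarrow> agree N g h \<Longrightarrow> agree N f h" by (simp add: agree_def)

lemma F_double:
  assumes k: "k \<ge> 1" shows "F4 (2 * k) = F4 k ^ 2 * T k"
proof (rule fps_ext)
  fix N
  have a1: "agree N (F4 (2 * k)) (P (2 * k) N)" unfolding F4_def using k by (intro fmapE_agree) simp
  have eq: "(P (2 * k) N :: 4 fps) = P k N ^ 2 * (1 + 2 * (\<Sum>m\<in>{1..N}. Dv (k * m)))"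
    using P_double[OF k, of N] prod_one_plus_two[of "{1..N}" "\<lambda>m. Dv (k * m)"] by simp
  have b: "agree N (F4 k) (P k N)" unfolding F4_def using k by (rule fmapE_agree)
  have "agree N (F4 k * F4 k * T k) (P k N * P k N * (1 + 2 * (\<Sum>m\<in>{1..N}. Dv (k * m))))"
    unfolding T_def by (intro agree_mult b agree_sym[OF sumDv_agree[OF k]])
  then have a2: "agree N (F4 k ^ 2 * T k) (P (2 * k) N)"
    unfolding eq by (simp add: power2_eq_square)
  from agree_trans[OF a1 agree_sym[OF a2]] show "F4 (2 * k) $ N = (F4 k ^ 2 * T k) $ N"
    by (simp add: agree_def)
qed

lemma T_power: "T k ^ c = 1 + 2 * of_nat c * S k"
proof (induction c)
  case 0 then show ?case by simp
next
  case (Suc c)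
  have "T k ^ Suc c = (1 + 2 * of_nat c * S k) * (1 + 2 * S k)"
    using Suc by (simp add: T_def mult.commute)
  also have "\<dots> = 1 + 2 * of_nat (Suc c) * S k + 4 * (of_nat c * S k * S k)"
    by (simp add: algebra_simps)
  also have "\<dots> = 1 + 2 * of_nat (Suc c) * S k"
    by (subst four0f) simp
  finally show ?case .
qed

lemma pow0: "(f ^ j :: 'a::comm_ring_1 fps) $ 0 = (f $ 0) ^ j"
  by (induction j) simp_all

lemma E_mult_0: "(E 1 ^ 2 * E 2 ^ j) $ 0 = 1"
  by (simp add: pow0)

lemma eta0: "eta_f k $ 0 = 1"
  by (simp add: eta_E)

lemma gf_eq:
  assumes c: "c \<ge> 1"
  shows "overcubic_gf c * (eta_f 1 ^ 2 * eta_f 2 ^ (2 * c - 2)) = eta_f 2 * eta_f 4 ^ (c - 1)"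
proof (cases "c = 1")
  case True
  have i2: "inverse (inverse (eta_f 2)) = eta_f 2" using eta0 by simp
  have i1: "inverse (eta_f 1 ^ 2) * eta_f 1 ^ 2 = 1" by (rule inverse_mult_eq_1) (simp add: eta0)
  have "overcubic_gf c = inverse (eta_f 1 ^ 2) * eta_f 2"
    using True by (simp add: overcubic_gf_def fps_ipow_def fps_inverse_mult i2)
  then show ?thesis using True i1 by (simp add: algebra_simps)
next
  case False
  with c have c2: "c \<ge> 2" by simp
  define X where "X = eta_f 1 ^ 2 * eta_f 2 ^ (2 * c - 3)"
  have gf: "overcubic_gf c = eta_f 4 ^ (c - 1) * inverse X"
  proof -
    have "nat (int c - 1) = c - 1" "nat (2 * int c - 3) = 2 * c - 3" "0 \<le> int c - 1" "0 \<le> 2 * int c - 3"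
      using c2 by auto
    then show ?thesis by (simp add: overcubic_gf_def fps_ipow_def X_def)
  qed
  have iX: "inverse X * X = 1" by (rule inverse_mult_eq_1) (simp add: X_def eta0)
  have "eta_f 1 ^ 2 * eta_f 2 ^ (2 * c - 2) = X * eta_f 2"
  proof -
    have "2 * c - 2 = Suc (2 * c - 3)" using c2 by simp
    then show ?thesis by (simp add: X_def algebra_simps)
  qed
  then have "overcubic_gf c * (eta_f 1 ^ 2 * eta_f 2 ^ (2 * c - 2)) = eta_f 4 ^ (c - 1) * (inverse X * X) * eta_f 2"
    by (simp add: gf algebra_simps)
  then show ?thesis using iX by (simp add: algebra_simps)
qed

lemma ex_sq_conv: "(\<exists>k::int. int n = int m * k ^ 2) \<longleftrightarrow> (\<exists>a::nat. n = m * a ^ 2)"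
proof
  assume "\<exists>k::int. int n = int m * k ^ 2"
  then obtain k :: int where k: "int n = int m * k ^ 2" by blast
  have "int (m * (nat \<bar>k\<bar>) ^ 2) = int m * k ^ 2" by simp
  then have "n = m * (nat \<bar>k\<bar>) ^ 2" using k by linarith
  then show "\<exists>a::nat. n = m * a ^ 2" by blast
next
  assume "\<exists>a::nat. n = m * a ^ 2"
  then obtain a where "n = m * a ^ 2" by blast
  then have "int n = int m * (int a) ^ 2" by simp
  then show "\<exists>k::int. int n = int m * k ^ 2" by blast
qed

theorem theorem1p3:
  fixes c n :: nat
  assumes "c \<ge> 1" and "n \<ge> 1"
  shows "\<exists>m::int. abar c n = of_int m \<and>
           [m = (if \<exists>k::int. int n = k ^ 2 then 2
                 else if \<exists>k::int. int n = 2 * k ^ 2 then 2 * (int c + 1)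
                 else 0)] (mod 4)"
proof -
  have c: "c \<ge> 1" and n: "n \<ge> 1" using assms by auto
  define W where "W = E 1 ^ 2 * E 2 ^ (2 * c - 2)"
  define U where "U = fps_right_inverse W 1"
  have WU: "W * U = 1" unfolding U_def by (rule fps_right_inverse) (simp add: W_def pow0)
  define G where "G = E 2 * E 4 ^ (c - 1) * U"
  have GW: "G * W = E 2 * E 4 ^ (c - 1)"
    unfolding G_def using WU by (metis mult.assoc mult.commute mult_1_right)
  have rat: "overcubic_gf c = fmap of_int G"
  proof -
    have W0: "fmap (of_int :: int \<Rightarrow> rat) W \<noteq> 0"
    proof
      assume "fmap (of_int :: int \<Rightarrow> rat) W = 0"
      then have "fmap (of_int :: int \<Rightarrow> rat) W $ 0 = 0" by simp
      then show False by (simp add: W_def)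
    qed
    have "overcubic_gf c * fmap of_int W = fmap of_int (E 2 * E 4 ^ (c - 1))"
      using gf_eq[OF c] by (simp add: W_def eta_E)
    also have "\<dots> = fmap of_int G * fmap of_int W"
      unfolding GW[symmetric] by simp
    finally show ?thesis using W0 by simp
  qed
  define H4 where "H4 = fmap (of_int :: int \<Rightarrow> 4) G"
  have F2: "F4 2 = F4 1 ^ 2 * T 1" using F_double[of 1] by simp
  have F4: "F4 4 = F4 2 ^ 2 * T 2" using F_double[of 2] by simp
  have HW: "H4 * fmap of_int W = F4 2 * F4 4 ^ (c - 1)"
    unfolding H4_def F4_def fmap_mult[symmetric] GW by simp
  also have "\<dots> = (T 1 * T 2 ^ (c - 1)) * fmap of_int W"
  proof -
    have "2 * c - 2 = 2 * (c - 1)" by simp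
    then have "fmap (of_int :: int \<Rightarrow> 4) W = F4 1 ^ 2 * (F4 2 ^ 2) ^ (c - 1)"
      by (simp add: W_def F4_def power_mult)
    then show ?thesis unfolding F4 by (simp add: F2 power_mult_distrib algebra_simps)
  qed
  finally have "H4 * fmap of_int W = (T 1 * T 2 ^ (c - 1)) * fmap of_int W" .
  then have "H4 * fmap of_int W * fmap of_int U = (T 1 * T 2 ^ (c - 1)) * fmap of_int W * fmap of_int U"
    by simp
  moreover have "fmap (of_int :: int \<Rightarrow> 4) W * fmap of_int U = 1"
    unfolding fmap_mult[symmetric] WU by simp
  ultimately have H4eq: "H4 = T 1 * T 2 ^ (c - 1)" by (simp add: mult.assoc)
  have H4eq2: "H4 = 1 + 2 * S 1 + 2 * of_nat (c - 1) * S 2"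
  proof -
    have "H4 = (1 + 2 * S 1) * (1 + 2 * of_nat (c - 1) * S 2)"
      unfolding H4eq T_power by (simp add: T_def)
    also have "\<dots> = 1 + 2 * S 1 + 2 * of_nat (c - 1) * S 2 + 4 * (S 1 * of_nat (c - 1) * S 2)"
      by (simp add: algebra_simps)
    also have "\<dots> = 1 + 2 * S 1 + 2 * of_nat (c - 1) * S 2"
      by (subst four0f) simp
    finally show ?thesis .
  qed
  have n0: "n \<noteq> 0" using n by simp
  have Hn: "H4 $ n = 2 * of_bool (\<exists>a. n = 1 * a ^ 2) + 2 * of_nat (c - 1) * of_bool (\<exists>a. n = 2 * a ^ 2)"
  proof -
    have t2: "(2 :: 4 fps) = fps_const 2" by (simp add: numeral_fps_const)
    have tc: "(2 * of_nat (c - 1) :: 4 fps) = fps_const (2 * of_nat (c - 1))"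
      by (simp add: numeral_fps_const fps_of_nat[symmetric])
    show ?thesis unfolding H4eq2 using n0
      apply (simp only: fps_add_nth tc)
      apply (simp only: t2 fps_mult_left_const_nth)
      apply (simp add: S_def)
      done
  qed
  define val :: int where "val = (if \<exists>k::int. int n = k ^ 2 then 2
                 else if \<exists>k::int. int n = 2 * k ^ 2 then 2 * (int c + 1) else 0)"
  have sq: "(\<exists>k::int. int n = k ^ 2) \<longleftrightarrow> (\<exists>a. n = 1 * a ^ 2)"
    using ex_sq_conv[of n 1] by simp
  have tsq: "(\<exists>k::int. int n = 2 * k ^ 2) \<longleftrightarrow> (\<exists>a. n = 2 * a ^ 2)"
    using ex_sq_conv[of n 2] by simp
  have excl: "\<not> ((\<exists>a. n = 1 * a ^ 2) \<and> (\<exists>a. n = 2 * a ^ 2))"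
  proof
    assume "(\<exists>a. n = 1 * a ^ 2) \<and> (\<exists>a. n = 2 * a ^ 2)"
    then obtain a where a: "n = a ^ 2" by auto
    from \<open>(\<exists>a. n = 1 * a ^ 2) \<and> (\<exists>a. n = 2 * a ^ 2)\<close> obtain b where b: "n = 2 * b ^ 2" by auto
    have "a ^ 2 = 2 * b ^ 2" using a b by simp
    then have "b = 0" by (rule not_sq_2sq)
    then show False using \<open>n = 2 * b ^ 2\<close> n0 by simp
  qed
  have cc: "(2 * of_nat (c - 1) :: 4) = of_int (2 * (int c + 1))"
  proof -
    have "c = Suc (c - 1)" using c by simp
    then have "(of_nat c :: 4) = of_nat (c - 1) + 1" by (metis of_nat_Suc add.commute)
    then have "(of_int (2 * (int c + 1)) :: 4) = 2 * of_nat (c - 1) + 4"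
      by (simp add: algebra_simps)
    then show ?thesis by (simp add: four0)
  qed
  have Hval: "H4 $ n = of_int val"
    unfolding Hn val_def sq tsq using excl cc by auto
  have "H4 $ n = of_int (G $ n)" by (simp add: H4_def)
  then have "(of_int (G $ n) :: 4) = of_int val" using Hval by simp
  then have cong: "[G $ n = val] (mod 4)"
    using of_int_eq_iff_cong_CHAR[where 'a=4] by simp
  have "abar c n = of_int (G $ n)" by (simp add: abar_def rat)
  then show ?thesis using cong unfolding val_def by blast
qed

end
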